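(* If $T$ is a tree with $n$ vertices, then $\nu^*(P_n)\le \nu^*(T)\le \nu^*(K_{1,n-1})$.
   Context: For a finite simple graph $G=(V,E)$ with $\ell=|V|+|E|$, a construction sequence (c-sequence) is a bijection $x:\{1,\dots,\ell\}\to V\sqcup E$ such that every edge $e=uw$ satisfies $x^{-1}(e)>\max\{x^{-1}(u),x^{-1}(w)\}$. The cost of $x$ is $\nu(x)=\sum_{e=uw\in E}\big(2x^{-1}(e)-x^{-1}(u)-x^{-1}(w)\big)$, and $\nu^*(G)$ is the maximum of $\nu(x)$ over all c-sequences for $G$. $P_n$ is the path on $n$ vertices and $K_{1,n-1}$ is the star with a hub adjacent to $n-1$ leaves. *)

theory Defs
  imports Main
begin

definition simple_graph :: "'a set \<Rightarrow> 'a set set \<Rightarrow> bool" where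
  "simple_graph V E \<longleftrightarrow> finite V \<and> (\<forall>e\<in>E. \<exists>u w. e = {u, w} \<and> u \<in> V \<and> w \<in> V \<and> u \<noteq> w)"

definition adj :: "'a set set \<Rightarrow> 'a \<Rightarrow> 'a \<Rightarrow> bool" where
  "adj E u w \<longleftrightarrow> {u, w} \<in> E"

definition connected_graph :: "'a set \<Rightarrow> 'a set set \<Rightarrow> bool" where
  "connected_graph V E \<longleftrightarrow> V \<noteq> {} \<and> (\<forall>u\<in>V. \<forall>w\<in>V. (adj E)\<^sup>*\<^sup>* u w)"

definition is_cycle :: "'a set \<Rightarrow> 'a set set \<Rightarrow> 'a list \<Rightarrow> bool" where
  "is_cycle V E cs \<longleftrightarrow> length cs \<ge> 3 \<and> distinct cs \<and> set cs \<subseteq> V \<and>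
     (\<forall>i. Suc i < length cs \<longrightarrow> adj E (cs ! i) (cs ! Suc i)) \<and>
     adj E (last cs) (hd cs)"

definition acyclic_graph :: "'a set \<Rightarrow> 'a set set \<Rightarrow> bool" where
  "acyclic_graph V E \<longleftrightarrow> (\<nexists>cs. is_cycle V E cs)"

definition is_tree :: "'a set \<Rightarrow> 'a set set \<Rightarrow> bool" where
  "is_tree V E \<longleftrightarrow> simple_graph V E \<and> connected_graph V E \<and> acyclic_graph V E"

text \<open>Construction sequences: x is a bijection from {1..|V|+|E|} onto V \<squnion> E
  (vertices tagged Inl, edges tagged Inr) such that each edge comes after both endpoints.\<close>
definition c_seq :: "'a set \<Rightarrow> 'a set set \<Rightarrow> (nat \<Rightarrow> 'a + 'a set) \<Rightarrow> bool" where
  "c_seq V E x \<longleftrightarrow> bij_betw x {1..card V + card E} (Inl ` V \<union> Inr ` E) \<and>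
     (\<forall>u w. {u, w} \<in> E \<longrightarrow>
        inv_into {1..card V + card E} x (Inr {u, w}) > max (inv_into {1..card V + card E} x (Inl u))
                                                          (inv_into {1..card V + card E} x (Inl w)))"

definition cost :: "'a set \<Rightarrow> 'a set set \<Rightarrow> (nat \<Rightarrow> 'a + 'a set) \<Rightarrow> int" where
  "cost V E x = (let p = inv_into {1..card V + card E} x in
     (\<Sum>e\<in>E. 2 * int (p (Inr e)) - (\<Sum>v\<in>e. int (p (Inl v)))))"

definition nu_star :: "'a set \<Rightarrow> 'a set set \<Rightarrow> int" where
  "nu_star V E = Max {cost V E x | x. c_seq V E x}"

definition path_edges :: "nat \<Rightarrow> nat set set" where
  "path_edges n = {{i, Suc i} | i. Suc i < n}"

definition star_edges :: "nat \<Rightarrow> nat set set" where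
  "star_edges n = {{0, i} | i. 1 \<le> i \<and> i < n}"

end

theory Submission
  imports Defs "HOL-Library.FuncSet"
begin


definition deg :: "'a set set \<Rightarrow> 'a \<Rightarrow> nat" where
  "deg E v = card {e\<in>E. v \<in> e}"

lemma sg_edge:
  assumes "simple_graph V E" "e \<in> E"
  obtains u w where "e = {u,w}" "u \<in> V" "w \<in> V" "u \<noteq> w"
  using assms unfolding simple_graph_def by blast

lemma sg_sub: "simple_graph V E \<Longrightarrow> e \<in> E \<Longrightarrow> e \<subseteq> V"
  by (metis sg_edge empty_subsetI insert_subset)

lemma sg_finite: "simple_graph V E \<Longrightarrow> finite V" by (simp add: simple_graph_def)

lemma sg_finE: "simple_graph V E \<Longrightarrow> finite E"
proof -
  assume a: "simple_graph V E"
  then have "E \<subseteq> Pow V" using sg_sub by blast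
  then show ?thesis using sg_finite[OF a] finite_subset by blast
qed

lemma sg_card2: "simple_graph V E \<Longrightarrow> e \<in> E \<Longrightarrow> card e = 2"
  by (metis sg_edge card_2_iff)

lemma double_count:
  fixes f :: "'a \<Rightarrow> int"
  assumes "simple_graph V E"
  shows "(\<Sum>e\<in>E. \<Sum>v\<in>e. f v) = (\<Sum>v\<in>V. int (deg E v) * f v)"
proof -
  have fV: "finite V" and fE: "finite E" using assms sg_finite sg_finE by auto
  have "(\<Sum>e\<in>E. \<Sum>v\<in>e. f v) = (\<Sum>e\<in>E. \<Sum>v\<in>V. if v \<in> e then f v else 0)"
  proof (rule sum.cong[OF refl])
    fix e assume "e \<in> E"
    then have "e \<subseteq> V" using sg_sub assms by blast
    then have "{v\<in>V. v \<in> e} = e" by blast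
    then show "(\<Sum>v\<in>e. f v) = (\<Sum>v\<in>V. if v \<in> e then f v else 0)"
      using sum.inter_filter[OF fV, of f "\<lambda>v. v \<in> e"] by simp
  qed
  also have "\<dots> = (\<Sum>v\<in>V. \<Sum>e\<in>E. if v \<in> e then f v else 0)" by (rule sum.swap)
  also have "\<dots> = (\<Sum>v\<in>V. int (deg E v) * f v)"
  proof (rule sum.cong[OF refl])
    fix v assume "v \<in> V"
    have "(\<Sum>e\<in>E. if v \<in> e then f v else 0) = (\<Sum>e\<in>{e\<in>E. v \<in> e}. f v)"
      using sum.inter_filter[OF fE, of "\<lambda>_. f v" "\<lambda>e. v \<in> e"] by simp
    also have "\<dots> = int (deg E v) * f v" by (simp add: deg_def)
    finally show "(\<Sum>e\<in>E. if v \<in> e then f v else 0) = int (deg E v) * f v" .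
  qed
  finally show ?thesis .
qed

lemma handshake:
  assumes "simple_graph V E"
  shows "(\<Sum>v\<in>V. deg E v) = 2 * card E"
proof -
  have "(\<Sum>e\<in>E. \<Sum>v\<in>e. (1::int)) = (\<Sum>v\<in>V. int (deg E v) * 1)"
    by (rule double_count[OF assms])
  moreover have "(\<Sum>e\<in>E. \<Sum>v\<in>e. (1::int)) = (\<Sum>e\<in>E. 2)"
    using sg_card2[OF assms] by (intro sum.cong) auto
  ultimately have "int (\<Sum>v\<in>V. deg E v) = int (2 * card E)" by simp
  then show ?thesis by linarith
qed

abbreviation pos :: "'a set \<Rightarrow> 'a set set \<Rightarrow> (nat \<Rightarrow> 'a + 'a set) \<Rightarrow> 'a + 'a set \<Rightarrow> nat" where
  "pos V E x \<equiv> inv_into {1..card V + card E} x"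

lemma cseq_bij: "c_seq V E x \<Longrightarrow> bij_betw (pos V E x) (Inl`V \<union> Inr`E) {1..card V + card E}"
  by (simp add: c_seq_def bij_betw_inv_into)

lemma pos_range: "c_seq V E x \<Longrightarrow> v \<in> V \<Longrightarrow> pos V E x (Inl v) \<in> {1..card V + card E}"
  using cseq_bij[of V E x] bij_betwE by blast

lemma pos_inj: "c_seq V E x \<Longrightarrow> inj_on (\<lambda>v. pos V E x (Inl v)) V"
proof -
  assume "c_seq V E x"
  then have "inj_on (pos V E x) (Inl`V \<union> Inr`E)" using cseq_bij bij_betw_def by blast
  then show ?thesis unfolding inj_on_def by blast
qed

lemma total:
  assumes "simple_graph V E" "c_seq V E x"
  shows "2 * ((\<Sum>v\<in>V. pos V E x (Inl v)) + (\<Sum>e\<in>E. pos V E x (Inr e)))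
     = (card V + card E) * (card V + card E + 1)"
proof -
  have fV: "finite V" and fE: "finite E" using assms sg_finite sg_finE by auto
  have "(\<Sum>z\<in>Inl`V \<union> Inr`E. pos V E x z) = (\<Sum>i\<in>{1..card V + card E}. i)"
    using sum.reindex_bij_betw[OF cseq_bij[OF assms(2)], of "\<lambda>i. i"] by simp
  moreover have "(\<Sum>z\<in>Inl`V \<union> Inr`E. pos V E x z) = (\<Sum>z\<in>Inl`V. pos V E x z) + (\<Sum>z\<in>Inr`E. pos V E x z)"
    by (rule sum.union_disjoint) (use fV fE in auto)
  moreover have "(\<Sum>z\<in>Inl`V. pos V E x z) = (\<Sum>v\<in>V. pos V E x (Inl v))"
    by (simp add: sum.reindex)
  moreover have "(\<Sum>z\<in>Inr`E. pos V E x z) = (\<Sum>e\<in>E. pos V E x (Inr e))"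
    by (simp add: sum.reindex)
  moreover have "2 * (\<Sum>i\<in>{1..card V + card E}. i) = (card V + card E) * (card V + card E + 1)"
    using gauss_sum_from_Suc_0[of "card V + card E", where ?'a = nat] by simp
  ultimately show ?thesis by simp
qed

lemma cost_eq:
  assumes "simple_graph V E" "c_seq V E x"
  shows "cost V E x = int ((card V + card E) * (card V + card E + 1))
           - (\<Sum>v\<in>V. (int (deg E v) + 2) * int (pos V E x (Inl v)))"
proof -
  let ?p = "pos V E x"
  have "cost V E x = (\<Sum>e\<in>E. 2 * int (?p (Inr e)) - (\<Sum>v\<in>e. int (?p (Inl v))))"
    by (simp add: cost_def Let_def)
  also have "\<dots> = 2 * (\<Sum>e\<in>E. int (?p (Inr e))) - (\<Sum>e\<in>E. \<Sum>v\<in>e. int (?p (Inl v)))"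
    by (simp add: sum_subtractf sum_distrib_left)
  also have "(\<Sum>e\<in>E. \<Sum>v\<in>e. int (?p (Inl v))) = (\<Sum>v\<in>V. int (deg E v) * int (?p (Inl v)))"
    by (rule double_count[OF assms(1)])
  finally have c: "cost V E x = 2 * (\<Sum>e\<in>E. int (?p (Inr e))) - (\<Sum>v\<in>V. int (deg E v) * int (?p (Inl v)))" .
  have t: "2 * ((\<Sum>v\<in>V. int (?p (Inl v))) + (\<Sum>e\<in>E. int (?p (Inr e))))
     = int ((card V + card E) * (card V + card E + 1))"
    using arg_cong[OF total[OF assms], of int] by simp
  have "(\<Sum>v\<in>V. (int (deg E v) + 2) * int (?p (Inl v))) =
        (\<Sum>v\<in>V. int (deg E v) * int (?p (Inl v))) + 2 * (\<Sum>v\<in>V. int (?p (Inl v)))"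
    by (simp add: algebra_simps sum.distrib sum_distrib_left)
  moreover obtain K where "K = int ((card V + card E) * (card V + card E + 1))" by blast
  ultimately show ?thesis using c t by (smt (verit))
qed



lemma adj_sym: "adj E u w = adj E w u" by (simp add: adj_def insert_commute)

lemma leaf_exists:
  assumes sg: "simple_graph V E" and ac: "acyclic_graph V E" and ne: "E \<noteq> {}"
  shows "\<exists>v0 v1. {v0,v1} \<in> E \<and> v0 \<noteq> v1 \<and> (\<forall>w. {v0,w} \<in> E \<longrightarrow> w = v1)"
proof -
  define P where "P = {xs. distinct xs \<and> set xs \<subseteq> V \<and> (\<forall>i. Suc i < length xs \<longrightarrow> adj E (xs!i) (xs!Suc i))}"
  have fV: "finite V" using sg sg_finite by blast
  have "P \<subseteq> {xs. set xs \<subseteq> V \<and> length xs \<le> card V}"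
  proof
    fix xs assume "xs \<in> P"
    then have "distinct xs" "set xs \<subseteq> V" by (auto simp: P_def)
    then show "xs \<in> {xs. set xs \<subseteq> V \<and> length xs \<le> card V}"
    proof -
      have "length xs = card (set xs)" using distinct_card[of xs] \<open>distinct xs\<close> by simp
      also have "\<dots> \<le> card V" using card_mono[OF fV \<open>set xs \<subseteq> V\<close>] .
      finally show ?thesis using \<open>set xs \<subseteq> V\<close> by simp
    qed
  qed
  then have fin: "finite P" using finite_lists_length_le[OF fV] finite_subset by blast
  obtain e where "e \<in> E" using ne by blast
  then obtain u w where uw: "{u,w} \<in> E" "u \<noteq> w" "u\<in>V" "w\<in>V" using sg_edge[OF sg] by metis
  have "[u,w] \<in> P" using uw by (auto simp: P_def adj_def less_Suc_eq)
  then have neP: "length ` P \<noteq> {}" by blast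
  have "Max (length ` P) \<in> length ` P" using Max_in[OF finite_imageI[OF fin] neP] .
  then obtain xs where xs: "xs \<in> P" "length xs = Max (length ` P)" by auto
  have mx: "\<forall>ys\<in>P. length ys \<le> length xs" using xs(2) Max_ge[OF finite_imageI[OF fin]] by auto
  have len: "length xs \<ge> 2" using mx[rule_format, OF \<open>[u,w] \<in> P\<close>] by simp
  have dx: "distinct xs" and sx: "set xs \<subseteq> V"
    and ax: "\<And>i. Suc i < length xs \<Longrightarrow> adj E (xs!i) (xs!Suc i)" using xs(1) by (auto simp: P_def)
  have e01: "{xs!0, xs!1} \<in> E" using ax[of 0] len by (simp add: adj_def)
  have n01: "xs!0 \<noteq> xs!1" proof
    assume "xs!0 = xs!1"
    then have "(0::nat) = 1" using nth_eq_iff_index_eq[OF dx, of 0 1] len by linarith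
    then show False by simp
  qed
  have "\<forall>w. {xs!0,w} \<in> E \<longrightarrow> w = xs!1"
  proof (intro allI impI)
    fix w assume we: "{xs!0,w} \<in> E"
    then have wV: "w \<in> V" using sg_sub[OF sg] by blast
    have wne: "w \<noteq> xs!0" using sg_card2[OF sg we] by (auto)
    show "w = xs!1"
    proof (cases "w \<in> set xs")
      case False
      have "w # xs \<in> P"
        unfolding P_def
      proof (intro CollectI conjI allI impI)
        show "distinct (w # xs)" using False dx by simp
        show "set (w # xs) \<subseteq> V" using sx wV by simp
        fix i assume i: "Suc i < length (w # xs)"
        show "adj E ((w # xs) ! i) ((w # xs) ! Suc i)"
        proof (cases i)
          case 0
          then show ?thesis using we by (simp add: adj_def insert_commute)
        next
          case (Suc j)
          then show ?thesis using ax[of j] i by simp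
        qed
      qed
      then show ?thesis using mx[rule_format, OF \<open>w # xs \<in> P\<close>] by simp
    next
      case True
      then obtain j where j: "j < length xs" "xs!j = w" by (auto simp: in_set_conv_nth)
      have "j \<noteq> 0" using j wne by (metis)
      show ?thesis
      proof (rule ccontr)
        assume "w \<noteq> xs!1"
        then have "j \<noteq> 1" using j by auto
        then have j2: "j \<ge> 2" using \<open>j \<noteq> 0\<close> by linarith
        define cs where "cs = take (Suc j) xs"
        have "is_cycle V E cs"
          unfolding is_cycle_def
        proof (intro conjI allI impI)
          show "3 \<le> length cs" using j j2 by (simp add: cs_def)
          show "distinct cs" using dx by (simp add: cs_def)
          show "set cs \<subseteq> V" using sx set_take_subset[of "Suc j" xs] unfolding cs_def by blast
          fix i assume "Suc i < length cs"
          then show "adj E (cs ! i) (cs ! Suc i)" using ax[of i] j by (simp add: cs_def)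
        next
          have "last cs = w" using j by (simp add: cs_def take_Suc_conv_app_nth)
          moreover have "hd cs = xs!0" using j by (cases xs) (auto simp: cs_def)
          ultimately show "adj E (last cs) (hd cs)" using we by (simp add: adj_def insert_commute)
        qed
        then show False using ac by (auto simp: acyclic_graph_def)
      qed
    qed
  qed
  then show ?thesis using e01 n01 by blast
qed


lemma remove_leaf_tree:
  assumes T: "is_tree V E" and e: "{v0,v1} \<in> E" "v0 \<noteq> v1" and lf: "\<forall>w. {v0,w} \<in> E \<longrightarrow> w = v1"
  shows "is_tree (V - {v0}) (E - {{v0,v1}})"
proof -
  let ?V = "V - {v0}" and ?E = "E - {{v0,v1}}"
  have sg: "simple_graph V E" and cn: "connected_graph V E" and ac: "acyclic_graph V E"
    using T by (auto simp: is_tree_def)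
  have v1V: "v1 \<in> V" using sg_sub[OF sg e(1)] by blast
  have sg': "simple_graph ?V ?E"
    unfolding simple_graph_def
  proof (intro conjI ballI)
    show "finite ?V" using sg_finite[OF sg] by simp
    fix f assume f: "f \<in> ?E"
    then obtain u w where uw: "f = {u,w}" "u \<in> V" "w \<in> V" "u \<noteq> w" using sg_edge[OF sg] by blast
    have "u \<noteq> v0" using lf f uw by auto
    moreover have "w \<noteq> v0" using lf f uw by (auto simp: insert_commute)
    ultimately show "\<exists>u w. f = {u, w} \<and> u \<in> ?V \<and> w \<in> ?V \<and> u \<noteq> w" using uw by blast
  qed
  have reach: "(adj ?E)\<^sup>*\<^sup>* v1 z" if "(adj E)\<^sup>*\<^sup>* a z" "a = v1" "z \<noteq> v0" for a z
    using that
  proof (induction rule: rtranclp_induct)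
    case base
    then show ?case by simp
  next
    case (step y z)
    show ?case
    proof (cases "y = v0")
      case True
      then have "z = v1" using step.hyps(2) lf by (simp add: adj_def)
      then show ?thesis by simp
    next
      case False
      then have "(adj ?E)\<^sup>*\<^sup>* v1 y" using step by blast
      moreover have "adj ?E y z" using step.hyps(2) False step.prems
        by (auto simp: adj_def doubleton_eq_iff)
      ultimately show ?thesis by simp
    qed
  qed
  have symE: "(adj ?E)\<inverse>\<inverse> = adj ?E" by (auto simp: fun_eq_iff adj_sym)
  have cn': "connected_graph ?V ?E"
    unfolding connected_graph_def
  proof (intro conjI ballI)
    show "?V \<noteq> {}" using v1V e(2) by blast
    fix u w assume u: "u \<in> ?V" and w: "w \<in> ?V"
    have "(adj E)\<^sup>*\<^sup>* v1 u" "(adj E)\<^sup>*\<^sup>* v1 w" using cn v1V u w by (auto simp: connected_graph_def)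
    then have a: "(adj ?E)\<^sup>*\<^sup>* v1 u" and b: "(adj ?E)\<^sup>*\<^sup>* v1 w" using reach u w by auto
    from a have "((adj ?E)\<inverse>\<inverse>)\<^sup>*\<^sup>* v1 u" using symE by simp
    then have "(adj ?E)\<^sup>*\<^sup>* u v1" by (rule rtranclp_converseD)
    then show "(adj ?E)\<^sup>*\<^sup>* u w" using b by simp
  qed
  have ac': "acyclic_graph ?V ?E"
    unfolding acyclic_graph_def
  proof
    assume "\<exists>cs. is_cycle ?V ?E cs"
    then obtain cs where "is_cycle ?V ?E cs" by blast
    then have "is_cycle V E cs" unfolding is_cycle_def adj_def by blast
    then show False using ac by (auto simp: acyclic_graph_def)
  qed
  show ?thesis using sg' cn' ac' by (simp add: is_tree_def)
qed


lemma tree_card: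
  assumes "is_tree V E"
  shows "card E + 1 = card V"
  using assms
proof (induction "card V" arbitrary: V E)
  case 0
  have "finite V" "V \<noteq> {}" using 0(2) unfolding is_tree_def connected_graph_def
    using sg_finite by blast+
  then show ?case using 0(1) by simp
next
  case (Suc m)
  have sg: "simple_graph V E" and cn: "connected_graph V E" and ac: "acyclic_graph V E"
    using Suc.prems by (auto simp: is_tree_def)
  have fV: "finite V" using sg sg_finite by blast
  have fE: "finite E" using sg sg_finE by blast
  show ?case
  proof (cases "E = {}")
    case True
    have "\<forall>a\<in>V. \<forall>b\<in>V. a = b"
    proof (intro ballI)
      fix a b assume "a \<in> V" "b \<in> V"
      then have "(adj E)\<^sup>*\<^sup>* a b" using cn by (auto simp: connected_graph_def)
      then show "a = b"
      proof (cases rule: converse_rtranclpE)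
        case (step y)
        then show ?thesis using True by (simp add: adj_def)
      qed simp
    qed
    then have "card V \<le> 1" using card_le_Suc0_iff_eq[OF fV] by simp
    then show ?thesis using True Suc.hyps(2) by simp
  next
    case False
    then obtain v0 v1 where l: "{v0,v1} \<in> E" "v0 \<noteq> v1" "\<forall>w. {v0,w} \<in> E \<longrightarrow> w = v1"
      using leaf_exists[OF sg ac] by blast
    have t': "is_tree (V - {v0}) (E - {{v0,v1}})" using remove_leaf_tree[OF Suc.prems l] .
    have v0V: "v0 \<in> V" using sg_sub[OF sg l(1)] by blast
    have cV: "card (V - {v0}) = m" using Suc.hyps(2) v0V fV by simp
    have "card (E - {{v0,v1}}) + 1 = card (V - {v0})" using Suc.hyps(1)[OF cV[symmetric] t'] .
    moreover have "card (E - {{v0,v1}}) = card E - 1" using l(1) fE by simp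
    moreover have "card E \<ge> 1" using l(1) fE card_gt_0_iff[of E] by (metis One_nat_def Suc_leI empty_iff)
    ultimately show ?thesis using cV Suc.hyps(2) by simp
  qed
qed



lemma tree_deg:
  assumes "is_tree V E" "card V \<ge> 2" "v \<in> V"
  shows "deg E v \<ge> 1"
proof -
  have sg: "simple_graph V E" and cn: "connected_graph V E" using assms by (auto simp: is_tree_def)
  have fV: "finite V" using sg sg_finite by blast
  have fE: "finite E" using sg sg_finE by blast
  have "\<not> (\<forall>a\<in>V. \<forall>b\<in>V. a = b)" using card_le_Suc0_iff_eq[OF fV] assms(2) by simp
  then obtain u where u: "u \<in> V" "u \<noteq> v" using assms(3) by blast
  have "(adj E)\<^sup>*\<^sup>* v u" using cn u assms(3) by (auto simp: connected_graph_def)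
  then obtain y where "adj E v y"
  proof (cases rule: converse_rtranclpE)
    case base
    then show ?thesis using u(2) by simp
  next
    case (step y)
    then show ?thesis using that by blast
  qed
  then have "{v,y} \<in> {e\<in>E. v \<in> e}" by (simp add: adj_def)
  then have "{e\<in>E. v \<in> e} \<noteq> {}" by blast
  then have "card {e\<in>E. v \<in> e} > 0" using fE by (simp add: card_gt_0_iff)
  then show ?thesis by (simp add: deg_def)
qed

fun wsum :: "('a \<Rightarrow> nat) \<Rightarrow> nat \<Rightarrow> 'a list \<Rightarrow> nat" where
  "wsum c k [] = 0"
| "wsum c k (x # xs) = k * c x + wsum c (Suc k) xs"

lemma wsum_shift: "wsum c (Suc k) xs = wsum c k xs + sum_list (map c xs)"
  by (induction xs arbitrary: k) auto

lemma wsum_append: "wsum c k (xs @ ys) = wsum c k xs + wsum c (k + length xs) ys"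
  by (induction xs arbitrary: k) auto

lemma wsum_zero: "(\<forall>x\<in>set xs. c x = 0) \<Longrightarrow> wsum c k xs = 0"
  by (induction xs arbitrary: k) auto

lemma wsum_one: "2 * wsum (\<lambda>_. 1) k xs + length xs = length xs * (2 * k + length xs)"
proof (induction xs arbitrary: k)
  case Nil
  then show ?case by simp
next
  case (Cons a xs)
  have "wsum (\<lambda>_. 1) (Suc k) xs = wsum (\<lambda>_. 1) k xs + length xs"
    using wsum_shift[of "\<lambda>_. (1::nat)" k xs] by (simp add: sum_list_triv)
  then show ?case using Cons[of k] by (simp add: algebra_simps)
qed

lemma wsum_sum:
  "distinct vs \<Longrightarrow> (\<forall>j<length vs. q (vs!j) = j + k) \<Longrightarrow> (\<Sum>v\<in>set vs. c v * q v) = wsum c k vs"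
proof (induction vs arbitrary: k)
  case Nil
  then show ?case by simp
next
  case (Cons a vs)
  have qa: "q a = k" using Cons.prems(2)[rule_format, of 0] by simp
  have "\<forall>j<length vs. q (vs!j) = j + Suc k"
  proof (intro allI impI)
    fix j assume "j < length vs"
    then show "q (vs!j) = j + Suc k" using Cons.prems(2)[rule_format, of "Suc j"] by simp
  qed
  then have "(\<Sum>v\<in>set vs. c v * q v) = wsum c (Suc k) vs" using Cons by simp
  then show ?case using Cons.prems(1) qa by (simp add: mult.commute)
qed

lemma cheb:
  fixes c :: "'a \<Rightarrow> nat"
  assumes "finite A"
  shows "\<exists>ws. distinct ws \<and> set ws = A \<and> 2 * wsum c 1 ws \<le> (\<Sum>v\<in>A. c v) * (card A + 1)"
  using assms
proof (induction "card A" arbitrary: A)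
  case 0
  then have "A = {}" by simp
  then show ?case by (intro exI[of _ "[]"]) simp
next
  case (Suc m)
  then have ne: "A \<noteq> {}" by auto
  have "Max (c ` A) \<in> c ` A" using Max_in[of "c ` A"] Suc.prems ne by simp
  then obtain v where v: "v \<in> A" "c v = Max (c ` A)" by auto
  have vmax: "\<forall>u\<in>A. c u \<le> c v" using v(2) Max_ge[of "c ` A"] Suc.prems by simp
  let ?A = "A - {v}"
  have cA: "m = card ?A" using Suc.hyps(2) v(1) Suc.prems by simp
  obtain ws where ws: "distinct ws" "set ws = ?A" "2 * wsum c 1 ws \<le> (\<Sum>u\<in>?A. c u) * (card ?A + 1)"
    using Suc.hyps(1)[OF cA] Suc.prems by blast
  define S where "S = (\<Sum>u\<in>?A. c u)"
  define W where "W = wsum c 1 ws"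
  have sl: "sum_list (map c ws) = S" unfolding S_def using sum.distinct_set_conv_list[OF ws(1), of c] ws(2) by simp
  have w: "wsum c 1 (v # ws) = c v + W + S"
    using wsum_shift[of c 1 ws] sl by (simp add: W_def)
  have sA: "(\<Sum>u\<in>A. c u) = c v + S" unfolding S_def using sum.remove[OF Suc.prems v(1)] by simp
  have Sle: "S \<le> m * c v" unfolding S_def using sum_bounded_above[of ?A c "c v"] vmax cA by simp
  have W2: "2 * W \<le> S * (m + 1)" using ws(3) cA by (simp add: W_def S_def)
  have e1: "(c v + S) * (Suc m + 1) = m * c v + 2 * c v + S * m + 2 * S" by (simp add: algebra_simps)
  have e2: "S * (m + 1) = S * m + S" by simp
  have "2 * wsum c 1 (v # ws) \<le> (\<Sum>u\<in>A. c u) * (card A + 1)"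
    unfolding w sA Suc.hyps(2)[symmetric] e1 using W2 Sle by (simp add: algebra_simps)
  moreover have "distinct (v # ws)" using ws by simp
  moreover have "set (v # ws) = A" using ws v by auto
  ultimately show ?case by blast
qed

lemma sum_pos_ge:
  fixes S :: "nat set"
  assumes "finite S" "0 \<notin> S"
  shows "card S * (card S + 1) \<le> 2 * \<Sum>S"
  using assms
proof (induction "card S" arbitrary: S)
  case 0
  then show ?case by simp
next
  case (Suc k)
  then have ne: "S \<noteq> {}" by auto
  define m where "m = Max S"
  have mS: "m \<in> S" using Max_in[OF Suc.prems(1) ne] m_def by simp
  have "S \<subseteq> {1..m}"
  proof
    fix x assume "x \<in> S"
    then have "x \<le> m" using Max_ge[OF Suc.prems(1)] m_def by simp
    moreover have "x \<noteq> 0" using \<open>x \<in> S\<close> Suc.prems(2) by metis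
    ultimately show "x \<in> {1..m}" by simp
  qed
  then have "card S \<le> m" using card_mono[of "{1..m}" S] by simp
  have ck: "k = card (S - {m})" using Suc.hyps(2) mS Suc.prems(1) by simp
  have ih: "k * (k + 1) \<le> 2 * \<Sum>(S - {m})"
    using Suc.hyps(1)[OF ck] Suc.prems ck by simp
  have "\<Sum>S = m + \<Sum>(S - {m})" using sum.remove[OF Suc.prems(1) mS, of "\<lambda>x. x"] by simp
  moreover have "card S * (card S + 1) = k * (k + 1) + 2 * card S"
    unfolding Suc.hyps(2)[symmetric] by (simp add: algebra_simps)
  ultimately show ?case using ih \<open>card S \<le> m\<close> by linarith
qed

lemma sum_inj_ge:
  fixes q :: "'a \<Rightarrow> nat"
  assumes "finite A" "inj_on q A" "\<forall>a\<in>A. q a \<ge> 1"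
  shows "card A * (card A + 1) \<le> 2 * (\<Sum>a\<in>A. q a)"
proof -
  have "(\<Sum>a\<in>A. q a) = \<Sum>(q ` A)" using sum.reindex[OF assms(2), of "\<lambda>x. x"] by simp
  moreover have "card (q ` A) = card A" using card_image[OF assms(2)] .
  moreover have "0 \<notin> q ` A" using assms(3) by auto
  ultimately show ?thesis using sum_pos_ge[of "q ` A"] assms(1) by simp
qed



lemma construct:
  assumes sg: "simple_graph V E" and vs: "distinct vs" "set vs = V"
  shows "\<exists>x. c_seq V E x \<and> (\<forall>j<length vs. pos V E x (Inl (vs!j)) = Suc j)"
proof -
  obtain es where es: "distinct es" "set es = E" using finite_distinct_list[OF sg_finE[OF sg]] by blast
  define zs where "zs = map Inl vs @ map Inr es"
  define L where "L = card V + card E"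
  have lv: "length vs = card V" using distinct_card[OF vs(1)] vs(2) by simp
  have le: "length es = card E" using distinct_card[OF es(1)] es(2) by simp
  have lz: "length zs = L" by (simp add: zs_def L_def lv le)
  have dz: "distinct zs" using vs(1) es(1) by (auto simp: zs_def distinct_map)
  have sz: "set zs = Inl`V \<union> Inr`E" using vs(2) es(2) by (simp add: zs_def)
  define x where "x = (\<lambda>i. zs ! (i - 1))"
  have inj: "inj_on x {1..L}"
  proof (rule inj_onI)
    fix i j assume ij: "i \<in> {1..L}" "j \<in> {1..L}" "x i = x j"
    then have "i - 1 = j - 1" using nth_eq_iff_index_eq[OF dz, of "i - 1" "j - 1"] lz
      by (auto simp: x_def)
    then show "i = j" using ij(1,2) by (simp add: atLeastAtMost_iff) arith
  qed
  have img: "x ` {1..L} = Inl`V \<union> Inr`E"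
  proof
    show "x ` {1..L} \<subseteq> Inl`V \<union> Inr`E"
    proof
      fix z assume "z \<in> x ` {1..L}"
      then obtain i where i: "i \<in> {1..L}" "z = zs ! (i - 1)" by (auto simp: x_def)
      then have "z \<in> set zs" using lz by auto
      then show "z \<in> Inl`V \<union> Inr`E" using sz by simp
    qed
  next
    show "Inl`V \<union> Inr`E \<subseteq> x ` {1..L}"
    proof
      fix z assume "z \<in> Inl`V \<union> Inr`E"
      then have "z \<in> set zs" using sz by simp
      then obtain k where k: "k < L" "zs ! k = z" using lz by (auto simp: in_set_conv_nth)
      then have "x (Suc k) = z" "Suc k \<in> {1..L}" by (auto simp: x_def)
      then show "z \<in> x ` {1..L}" by (metis imageI)
    qed
  qed
  have bij: "bij_betw x {1..L} (Inl`V \<union> Inr`E)" using inj img by (simp add: bij_betw_def)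
  have pv: "pos V E x (Inl (vs!j)) = Suc j" if "j < length vs" for j
  proof -
    have "x (Suc j) = Inl (vs!j)" using that by (simp add: x_def zs_def nth_append)
    moreover have "Suc j \<in> {1..L}" using that lz by (simp add: zs_def)
    ultimately show ?thesis using inv_into_f_f[OF inj, of "Suc j"] by (simp add: L_def)
  qed
  have pe: "pos V E x (Inr (es!j)) = Suc (card V + j)" if "j < length es" for j
  proof -
    have "x (Suc (card V + j)) = Inr (es!j)" using that lv by (simp add: x_def zs_def nth_append)
    moreover have "Suc (card V + j) \<in> {1..L}" using that lz lv by (simp add: zs_def)
    ultimately show ?thesis using inv_into_f_f[OF inj, of "Suc (card V + j)"] by (simp add: L_def)
  qed
  have ord: "pos V E x (Inr {u, w}) > max (pos V E x (Inl u)) (pos V E x (Inl w))"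
    if uw: "{u,w} \<in> E" for u w
  proof -
    have "u \<in> V" "w \<in> V" using sg_sub[OF sg uw] by auto
    then obtain a b where a: "a < length vs" "vs!a = u" and b: "b < length vs" "vs!b = w"
      using vs(2) by (metis in_set_conv_nth)
    obtain k where k: "k < length es" "es!k = {u,w}" using uw es(2) by (metis in_set_conv_nth)
    show ?thesis using pv[OF a(1)] pv[OF b(1)] pe[OF k(1)] a b k lv by auto
  qed
  have "c_seq V E x" unfolding c_seq_def using bij ord by (simp add: L_def)
  then show ?thesis using pv by blast
qed

lemma cost_eq2:
  assumes sg: "simple_graph V E" and c: "c_seq V E x" and d: "\<forall>v\<in>V. deg E v \<ge> 1"
  shows "cost V E x = int ((card V + card E) * (card V + card E + 1))
    - 3 * int (\<Sum>v\<in>V. pos V E x (Inl v)) - int (\<Sum>v\<in>V. (deg E v - 1) * pos V E x (Inl v))"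
proof -
  have "(\<Sum>v\<in>V. (int (deg E v) + 2) * int (pos V E x (Inl v)))
     = (\<Sum>v\<in>V. 3 * int (pos V E x (Inl v)) + int ((deg E v - 1) * pos V E x (Inl v)))"
  proof (rule sum.cong[OF refl])
    fix v assume "v \<in> V"
    then have "deg E v \<ge> 1" using d by blast
    then show "(int (deg E v) + 2) * int (pos V E x (Inl v)) = 3 * int (pos V E x (Inl v)) + int ((deg E v - 1) * pos V E x (Inl v))"
      by (simp add: of_nat_diff algebra_simps)
  qed
  also have "\<dots> = 3 * int (\<Sum>v\<in>V. pos V E x (Inl v)) + int (\<Sum>v\<in>V. (deg E v - 1) * pos V E x (Inl v))"
    by (simp add: sum.distrib sum_distrib_left)
  finally show ?thesis using cost_eq[OF sg c] by simp
qed

lemma sum_deg_minus: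
  assumes sg: "simple_graph V E" and d: "\<forall>v\<in>V. deg E v \<ge> 1"
  shows "(\<Sum>v\<in>V. deg E v - 1) + card V = 2 * card E"
proof -
  have "(\<Sum>v\<in>V. deg E v) = (\<Sum>v\<in>V. (deg E v - 1) + 1)"
    by (rule sum.cong) (use d in auto)
  moreover have "(\<Sum>v\<in>V. (deg E v - 1) + 1) = (\<Sum>v\<in>V. deg E v - 1) + (\<Sum>v\<in>V. 1)"
    by (rule sum.distrib)
  ultimately show ?thesis using handshake[OF sg] by simp
qed

lemma arith1:
  fixes c K Q R A e v :: int
  shows "c = K - 3*Q - R \<Longrightarrow> A \<le> 2*Q \<Longrightarrow> 2*e \<le> R + v \<Longrightarrow> 2*c \<le> 2*K - 3*A - 2*(2*e - v)"
  by (smt (verit))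

lemma ub_general:
  assumes sg: "simple_graph V E" and c: "c_seq V E x" and d: "\<forall>v\<in>V. deg E v \<ge> 1"
  shows "2 * cost V E x \<le> 2 * int ((card V + card E) * (card V + card E + 1))
     - 3 * int (card V * (card V + 1)) - 2 * (2 * int (card E) - int (card V))"
proof -
  let ?q = "\<lambda>v. pos V E x (Inl v)"
  have fV: "finite V" using sg sg_finite by blast
  have q1: "\<forall>v\<in>V. ?q v \<ge> 1" using pos_range[OF c] by auto
  have Q: "card V * (card V + 1) \<le> 2 * (\<Sum>v\<in>V. ?q v)"
    using sum_inj_ge[OF fV pos_inj[OF c] q1] .
  have "(\<Sum>v\<in>V. deg E v - 1) \<le> (\<Sum>v\<in>V. (deg E v - 1) * ?q v)"
  proof (rule sum_mono)
    fix v assume "v \<in> V"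
    then show "deg E v - 1 \<le> (deg E v - 1) * ?q v" using q1 by simp
  qed
  then have R: "2 * card E \<le> (\<Sum>v\<in>V. (deg E v - 1) * ?q v) + card V"
    using sum_deg_minus[OF sg d] by linarith
  have Qi: "int (card V * (card V + 1)) \<le> 2 * int (\<Sum>v\<in>V. ?q v)" using Q by linarith
  have Ri: "2 * int (card E) \<le> int (\<Sum>v\<in>V. (deg E v - 1) * ?q v) + int (card V)" using R by linarith
  show ?thesis using arith1[OF cost_eq2[OF sg c d] Qi Ri] .
qed

lemma cost_finite:
  assumes sg: "simple_graph V E"
  shows "finite {cost V E x | x. c_seq V E x}"
proof -
  let ?L = "card V + card E" and ?B = "Inl`V \<union> Inr`E"
  have "{cost V E x | x. c_seq V E x} \<subseteq> (cost V E) ` (PiE {1..?L} (\<lambda>_. ?B))"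
  proof
    fix y assume "y \<in> {cost V E x | x. c_seq V E x}"
    then obtain x where x: "y = cost V E x" "c_seq V E x" by blast
    have "x ` {1..?L} = ?B" using x(2) by (simp add: c_seq_def bij_betw_def)
    then have "\<forall>i\<in>{1..?L}. x i \<in> ?B" by blast
    then have "restrict x {1..?L} \<in> PiE {1..?L} (\<lambda>_. ?B)" by (simp add: restrict_PiE_iff)
    moreover have "inv_into {1..?L} (restrict x {1..?L}) = inv_into {1..?L} x"
      unfolding inv_into_def by (intro ext arg_cong[where f=Eps]) (auto simp: fun_eq_iff)
    then have "cost V E (restrict x {1..?L}) = cost V E x" by (simp add: cost_def)
    ultimately show "y \<in> (cost V E) ` (PiE {1..?L} (\<lambda>_. ?B))" using x(1) by (metis imageI)
  qed
  moreover have "finite (PiE {1..?L} (\<lambda>_. ?B))"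
    using sg_finite[OF sg] sg_finE[OF sg] by (intro finite_PiE) auto
  ultimately show ?thesis using finite_subset by blast
qed

lemma cseq_exists:
  assumes sg: "simple_graph V E"
  shows "\<exists>x. c_seq V E x"
proof -
  obtain vs where "distinct vs" "set vs = V" using finite_distinct_list[OF sg_finite[OF sg]] by blast
  then show ?thesis using construct[OF sg] by blast
qed

lemma nu_star_empty:
  assumes "simple_graph V {}"
  shows "nu_star V {} = 0"
proof -
  have "{cost V {} x | x. c_seq V {} x} = {0}"
    using cseq_exists[OF assms] by (auto simp: cost_def)
  then show ?thesis by (simp add: nu_star_def)
qed



lemma path_sg: "simple_graph {0..<n} (path_edges n)"
  unfolding simple_graph_def path_edges_def
proof (intro conjI ballI)
  fix e assume "e \<in> {{i, Suc i} |i. Suc i < n}"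
  then obtain i where "e = {i, Suc i}" "Suc i < n" by blast
  then show "\<exists>u w. e = {u, w} \<and> u \<in> {0..<n} \<and> w \<in> {0..<n} \<and> u \<noteq> w"
    by (intro exI[of _ i] exI[of _ "Suc i"]) auto
qed simp

lemma path_card: "card (path_edges n) = n - 1"
proof -
  have "path_edges n = (\<lambda>i. {i, Suc i}) ` {0..<n-1}" by (auto simp: path_edges_def)
  moreover have "inj_on (\<lambda>i. {i, Suc i}) {0..<n-1}" by (auto simp: inj_on_def doubleton_eq_iff)
  ultimately show ?thesis by (simp add: card_image)
qed

lemma deg_pos: "finite E \<Longrightarrow> e \<in> E \<Longrightarrow> v \<in> e \<Longrightarrow> deg E v \<ge> 1"
proof -
  assume "finite E" "e \<in> E" "v \<in> e"
  then have "e \<in> {e\<in>E. v \<in> e}" "finite {e\<in>E. v \<in> e}" by auto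
  then have "card {e\<in>E. v \<in> e} > 0" using card_gt_0_iff by blast
  then show ?thesis by (simp add: deg_def)
qed

lemma path_deg1:
  assumes "n \<ge> 2" "v < n"
  shows "deg (path_edges n) v \<ge> 1"
proof -
  have fE: "finite (path_edges n)" using sg_finE[OF path_sg] .
  show ?thesis
  proof (cases "Suc v < n")
    case True
    then have "{v, Suc v} \<in> path_edges n" by (auto simp: path_edges_def)
    then show ?thesis using deg_pos[OF fE] by simp
  next
    case False
    then have "v = Suc (v - 1)" "Suc (v - 1) < n" using assms by auto
    then have "{v - 1, Suc (v - 1)} \<in> path_edges n" by (auto simp: path_edges_def)
    then show ?thesis using deg_pos[OF fE] \<open>v = Suc (v - 1)\<close> by (metis insertCI)
  qed
qed

lemma path_deg2:
  assumes "0 < v" "Suc v < n"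
  shows "deg (path_edges n) v \<ge> 2"
proof -
  have fE: "finite (path_edges n)" using sg_finE[OF path_sg] .
  have v: "v = Suc (v - 1)" using assms by simp
  have a: "{v - 1, v} \<in> {e\<in>path_edges n. v \<in> e}"
    using assms v by (auto simp: path_edges_def intro!: exI[of _ "v - 1"])
  have b: "{v, Suc v} \<in> {e\<in>path_edges n. v \<in> e}" using assms by (auto simp: path_edges_def)
  have ne: "{v - 1, v} \<noteq> {v, Suc v}" using assms by (auto simp: doubleton_eq_iff)
  have "card {{v - 1, v}, {v, Suc v}} \<le> card {e\<in>path_edges n. v \<in> e}"
    using a b fE by (intro card_mono) auto
  then show ?thesis using ne by (simp add: deg_def)
qed

lemma star_sg: "simple_graph {0..<n} (star_edges n)"
  unfolding simple_graph_def star_edges_def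
proof (intro conjI ballI)
  fix e assume "e \<in> {{0, i} |i. 1 \<le> i \<and> i < n}"
  then obtain i where "e = {0, i}" "1 \<le> i" "i < n" by blast
  then show "\<exists>u w. e = {u, w} \<and> u \<in> {0..<n} \<and> w \<in> {0..<n} \<and> u \<noteq> w"
    by (intro exI[of _ 0] exI[of _ i]) auto
qed simp

lemma star_card: "card (star_edges n) = n - 1"
proof -
  have "star_edges n = (\<lambda>i. {0, i}) ` {1..<n}" by (auto simp: star_edges_def)
  moreover have "inj_on (\<lambda>i. {0::nat, i}) {1..<n}" by (auto simp: inj_on_def doubleton_eq_iff)
  ultimately show ?thesis by (simp add: card_image)
qed

lemma star_deg0: "deg (star_edges n) 0 = n - 1"
proof -
  have "{e\<in>star_edges n. 0 \<in> e} = star_edges n" by (auto simp: star_edges_def)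
  then show ?thesis by (simp add: deg_def star_card)
qed

lemma star_degj:
  assumes "1 \<le> j" "j < n"
  shows "deg (star_edges n) j = 1"
proof -
  have "{e\<in>star_edges n. j \<in> e} = {{0, j}}" using assms by (auto simp: star_edges_def)
  then show ?thesis by (simp add: deg_def)
qed

lemma arith2:
  fixes c K Q R A B :: int
  shows "c = K - 3*Q - R \<Longrightarrow> A \<le> 2*Q \<Longrightarrow> B \<le> 2*R \<Longrightarrow> 2*c \<le> 2*K - 3*A - B"
  by (smt (verit))

lemma ub_path:
  assumes n: "n \<ge> 2" and c: "c_seq {0..<n} (path_edges n) x"
  shows "2 * cost {0..<n} (path_edges n) x \<le>
    2 * int ((card {0..<n} + card (path_edges n)) * (card {0..<n} + card (path_edges n) + 1))
    - 3 * int (n * (n + 1)) - int ((n - 2) * (n - 1))"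
proof -
  let ?V = "{0..<n}" and ?E = "path_edges n"
  let ?q = "\<lambda>v. pos ?V ?E x (Inl v)"
  have sg: "simple_graph ?V ?E" by (rule path_sg)
  have d: "\<forall>v\<in>?V. deg ?E v \<ge> 1" using path_deg1[OF n] by simp
  have q1: "\<forall>v\<in>?V. ?q v \<ge> 1" using pos_range[OF c] by auto
  have Q: "card ?V * (card ?V + 1) \<le> 2 * (\<Sum>v\<in>?V. ?q v)"
    using sum_inj_ge[OF _ pos_inj[OF c] q1] by simp
  let ?A = "{1..<n-1}"
  have AV: "?A \<subseteq> ?V" by auto
  have cA: "card ?A = n - 2" by simp
  have q1A: "\<forall>v\<in>?A. ?q v \<ge> 1" using q1 AV by blast
  have QA: "card ?A * (card ?A + 1) \<le> 2 * (\<Sum>v\<in>?A. ?q v)"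
    using sum_inj_ge[OF _ inj_on_subset[OF pos_inj[OF c] AV] q1A] by simp
  have e: "n - 2 + 1 = n - 1" using n by simp
  have QA': "(n - 2) * (n - 1) \<le> 2 * (\<Sum>v\<in>?A. ?q v)" using QA unfolding cA e .
  have "(\<Sum>v\<in>?A. ?q v) \<le> (\<Sum>v\<in>?A. (deg ?E v - 1) * ?q v)"
  proof (rule sum_mono)
    fix v assume "v \<in> ?A"
    then have "0 < v" "Suc v < n" by auto
    then have "deg ?E v \<ge> 2" using path_deg2[of v n] by simp
    then have "1 \<le> deg ?E v - 1" by simp
    then show "?q v \<le> (deg ?E v - 1) * ?q v" using mult_le_mono1[of 1 "deg ?E v - 1" "?q v"] by simp
  qed
  also have "\<dots> \<le> (\<Sum>v\<in>?V. (deg ?E v - 1) * ?q v)"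
    by (rule sum_mono2) (use AV in auto)
  finally have R: "(n - 2) * (n - 1) \<le> 2 * (\<Sum>v\<in>?V. (deg ?E v - 1) * ?q v)"
    using QA' by linarith
  have Q': "n * (n + 1) \<le> 2 * (\<Sum>v\<in>?V. ?q v)" using Q by simp
  have Qi: "int (n * (n + 1)) \<le> 2 * int (\<Sum>v\<in>?V. ?q v)" using Q' by linarith
  have Ri: "int ((n - 2) * (n - 1)) \<le> 2 * int (\<Sum>v\<in>?V. (deg ?E v - 1) * ?q v)" using R by linarith
  show ?thesis using arith2[OF cost_eq2[OF sg c d] Qi Ri] .
qed



lemma arith3:
  fixes c K Q R N B :: int
  shows "c = K - 3*Q - R \<Longrightarrow> 2*Q = N \<Longrightarrow> 2*R \<le> B \<Longrightarrow> 2*c \<ge> 2*K - 3*N - B"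
  by (smt (verit))

lemma tree_good:
  assumes T: "is_tree V E" and n: "card V \<ge> 2"
  shows "\<exists>x. c_seq V E x \<and> 2 * cost V E x \<ge>
    2 * int ((card V + card E) * (card V + card E + 1)) - 3 * int (card V * (card V + 1))
    - int ((card V - 2) * (card V - 1))"
proof -
  have sg: "simple_graph V E" using T by (simp add: is_tree_def)
  have fV: "finite V" using sg sg_finite by blast
  have d: "\<forall>v\<in>V. deg E v \<ge> 1" using tree_deg[OF T n] by blast
  have cE: "card E + 1 = card V" using tree_card[OF T] .
  define c where "c = (\<lambda>v. deg E v - 1)"
  have sc: "(\<Sum>v\<in>V. c v) = card V - 2" using sum_deg_minus[OF sg d] cE unfolding c_def by simp
  define Z where "Z = {v\<in>V. deg E v = 1}"
  have fZ: "finite Z" "Z \<subseteq> V" using fV by (auto simp: Z_def)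
  have "\<not> card Z \<le> 1"
  proof
    assume cz: "card Z \<le> 1"
    have "(\<Sum>v\<in>V - Z. (1::nat)) \<le> (\<Sum>v\<in>V - Z. c v)"
      by (rule sum_mono) (use d in \<open>auto simp: Z_def c_def\<close>)
    also have "\<dots> \<le> (\<Sum>v\<in>V. c v)" by (rule sum_mono2) (use fV in auto)
    finally have "card (V - Z) \<le> card V - 2" using sc by simp
    moreover have "card (V - Z) = card V - card Z" using card_Diff_subset[OF fZ(1) fZ(2)] .
    ultimately show False using cz n by linarith
  qed
  then obtain a b where ab: "a \<in> Z" "b \<in> Z" "a \<noteq> b" using card_le_Suc0_iff_eq[OF fZ(1)] by auto
  have abV: "a \<in> V" "b \<in> V" and cab: "c a = 0" "c b = 0" using ab by (auto simp: Z_def c_def)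
  define A where "A = V - {a, b}"
  have fA: "finite A" using fV by (simp add: A_def)
  obtain ws where ws: "distinct ws" "set ws = A" "2 * wsum c 1 ws \<le> (\<Sum>v\<in>A. c v) * (card A + 1)"
    using cheb[OF fA, of c] by blast
  have cA: "card A = card V - 2" using abV ab(3) fV by (simp add: A_def card_Diff_subset)
  have sA: "(\<Sum>v\<in>A. c v) = (\<Sum>v\<in>V. c v)"
    by (rule sum.mono_neutral_left) (use fV cab in \<open>auto simp: A_def\<close>)
  have e: "card V - 2 + 1 = card V - 1" using n by simp
  have W: "2 * wsum c 1 ws \<le> (card V - 2) * (card V - 1)" using ws(3) unfolding sA sc cA e .
  define vs where "vs = ws @ [a, b]"
  have dvs: "distinct vs" using ws ab(3) by (auto simp: vs_def A_def)
  have svs: "set vs = V" using ws abV by (auto simp: vs_def A_def)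
  have lvs: "length vs = card V" using distinct_card[OF dvs] svs by simp
  obtain x where x: "c_seq V E x" "\<forall>j<length vs. pos V E x (Inl (vs!j)) = Suc j"
    using construct[OF sg dvs svs] by blast
  let ?q = "\<lambda>v. pos V E x (Inl v)"
  have qj: "\<forall>j<length vs. ?q (vs!j) = j + 1" using x(2) by simp
  have R: "(\<Sum>v\<in>V. c v * ?q v) = wsum c 1 ws"
  proof -
    have "(\<Sum>v\<in>V. c v * ?q v) = wsum c 1 vs" using wsum_sum[OF dvs qj, of c] svs by simp
    also have "\<dots> = wsum c 1 ws" using cab by (simp add: vs_def wsum_append)
    finally show ?thesis .
  qed
  have Q: "2 * (\<Sum>v\<in>V. ?q v) + card V = card V * (2 + card V)"
  proof -
    have "(\<Sum>v\<in>V. ?q v) = (\<Sum>v\<in>V. (\<lambda>_. 1::nat) v * ?q v)" by simp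
    also have "\<dots> = wsum (\<lambda>_. 1) 1 vs" using wsum_sum[OF dvs qj, of "\<lambda>_. 1"] svs by simp
    finally show ?thesis using wsum_one[of 1 vs] lvs by simp
  qed
  have Q2: "2 * int (\<Sum>v\<in>V. ?q v) = int (card V * (card V + 1))"
  proof -
    have "2 * (\<Sum>v\<in>V. ?q v) = card V * (card V + 1)" using Q by (simp add: algebra_simps)
    then show ?thesis by linarith
  qed
  have R2: "2 * int (\<Sum>v\<in>V. (deg E v - 1) * ?q v) \<le> int ((card V - 2) * (card V - 1))"
    using R W unfolding c_def by linarith
  have "2 * cost V E x \<ge>
    2 * int ((card V + card E) * (card V + card E + 1)) - 3 * int (card V * (card V + 1))
    - int ((card V - 2) * (card V - 1))"
    using arith3[OF cost_eq2[OF sg x(1) d] Q2 R2] .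
  then show ?thesis using x(1) by blast
qed

lemma star_good:
  assumes n: "n \<ge> 2"
  shows "\<exists>x. c_seq {0..<n} (star_edges n) x \<and> 2 * cost {0..<n} (star_edges n) x =
    2 * int ((card {0..<n} + card (star_edges n)) * (card {0..<n} + card (star_edges n) + 1))
    - 3 * int (n * (n + 1)) - 2 * int (n - 2)"
proof -
  let ?V = "{0..<n}" and ?E = "star_edges n"
  have sg: "simple_graph ?V ?E" by (rule star_sg)
  have d: "\<forall>v\<in>?V. deg ?E v \<ge> 1"
  proof
    fix v assume "v \<in> ?V"
    then show "deg ?E v \<ge> 1" using n star_deg0[of n] star_degj[of v n] by (cases "v = 0") auto
  qed
  define vs where "vs = [0..<n]"
  have dvs: "distinct vs" and svs: "set vs = ?V" and lvs: "length vs = n" by (auto simp: vs_def)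
  obtain x where x: "c_seq ?V ?E x" "\<forall>j<length vs. pos ?V ?E x (Inl (vs!j)) = Suc j"
    using construct[OF sg dvs svs] by blast
  let ?q = "\<lambda>v. pos ?V ?E x (Inl v)"
  define c where "c = (\<lambda>v. deg ?E v - 1)"
  have qj: "\<forall>j<length vs. ?q (vs!j) = j + 1" using x(2) by simp
  have R: "(\<Sum>v\<in>?V. c v * ?q v) = n - 2"
  proof -
    have "(\<Sum>v\<in>?V. c v * ?q v) = wsum c 1 vs" using wsum_sum[OF dvs qj, of c] svs by simp
    also have "vs = 0 # [1..<n]" using n by (simp add: vs_def upt_conv_Cons)
    also have "wsum c 1 (0 # [1..<n]) = c 0 + wsum c (Suc (Suc 0)) [1..<n]" by simp
    also have "wsum c (Suc (Suc 0)) [1..<n] = 0" by (rule wsum_zero) (auto simp: c_def star_degj)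
    also have "c 0 = n - 2" by (simp add: c_def star_deg0)
    finally show ?thesis by simp
  qed
  have Q: "2 * (\<Sum>v\<in>?V. ?q v) + n = n * (2 + n)"
  proof -
    have "(\<Sum>v\<in>?V. ?q v) = (\<Sum>v\<in>?V. (\<lambda>_. 1::nat) v * ?q v)" by simp
    also have "\<dots> = wsum (\<lambda>_. 1) 1 vs" using wsum_sum[OF dvs qj, of "\<lambda>_. 1"] svs by simp
    finally show ?thesis using wsum_one[of 1 vs] lvs by simp
  qed
  have Q2: "2 * int (\<Sum>v\<in>?V. ?q v) = int (n * (n + 1))"
  proof -
    have "2 * (\<Sum>v\<in>?V. ?q v) = n * (n + 1)" using Q by (simp add: algebra_simps)
    then show ?thesis by linarith
  qed
  have R2: "int (\<Sum>v\<in>?V. (deg ?E v - 1) * ?q v) = int (n - 2)"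
    using R unfolding c_def by simp
  have "2 * cost ?V ?E x = 2 * int ((card ?V + card ?E) * (card ?V + card ?E + 1))
    - 3 * int (n * (n + 1)) - 2 * int (n - 2)"
    using cost_eq2[OF sg x(1) d] Q2 R2 by linarith
  then show ?thesis using x(1) by blast
qed



theorem theorem4:
  fixes V :: "'a set" and E :: "'a set set" and n :: nat
  assumes "is_tree V E" and "card V = n"
  shows "nu_star {0..<n} (path_edges n) \<le> nu_star V E \<and> nu_star V E \<le> nu_star {0..<n} (star_edges n)"
proof -
  have T: "is_tree V E" using assms(1) .
  have sg: "simple_graph V E" using T by (simp add: is_tree_def)
  have fV: "finite V" using sg_finite[OF sg] .
  have "V \<noteq> {}" using T by (simp add: is_tree_def connected_graph_def)
  then have n1: "n \<ge> 1" using assms(2) fV card_gt_0_iff[of V] by linarith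
  have cE: "card E + 1 = n" using tree_card[OF T] assms(2) by simp
  show ?thesis
  proof (cases "n = 1")
    case True
    have E0: "E = {}" using cE True sg_finE[OF sg] by simp
    have P0: "path_edges n = {}" using True by (simp add: path_edges_def)
    have S0: "star_edges n = {}" using True by (auto simp: star_edges_def)
    have "nu_star V E = 0" using nu_star_empty[of V] sg E0 by simp
    moreover have "nu_star {0..<n} (path_edges n) = 0" using nu_star_empty path_sg[of n] P0 by metis
    moreover have "nu_star {0..<n} (star_edges n) = 0" using nu_star_empty star_sg[of n] S0 by metis
    ultimately show ?thesis by simp
  next
    case False
    then have n2: "n \<ge> 2" using n1 by simp
    define K where "K = 2 * int ((n + (n - 1)) * (n + (n - 1) + 1)) - 3 * int (n * (n + 1))"
    have cP: "card (path_edges n) = n - 1" by (rule path_card)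
    have cS: "card (star_edges n) = n - 1" by (rule star_card)
    have cEn: "card E = n - 1" using cE by simp
    have d: "\<forall>v\<in>V. deg E v \<ge> 1" using tree_deg[OF T] assms(2) n2 by blast
    let ?CT = "{cost V E x | x. c_seq V E x}"
    let ?CP = "{cost {0..<n} (path_edges n) x | x. c_seq {0..<n} (path_edges n) x}"
    let ?CS = "{cost {0..<n} (star_edges n) x | x. c_seq {0..<n} (star_edges n) x}"
    have fT: "finite ?CT" using cost_finite[OF sg] .
    have fP: "finite ?CP" using cost_finite[OF path_sg] .
    have fS: "finite ?CS" using cost_finite[OF star_sg] .
    obtain xT where xT: "c_seq V E xT" "2 * cost V E xT \<ge> K - int ((n - 2) * (n - 1))"
      using tree_good[OF T] assms(2) n2 cEn unfolding K_def by auto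
    obtain xS where xS: "c_seq {0..<n} (star_edges n) xS"
      "2 * cost {0..<n} (star_edges n) xS = K - 2 * int (n - 2)"
      using star_good[OF n2] cS unfolding K_def by auto
    have neP: "?CP \<noteq> {}" using cseq_exists[OF path_sg] by blast
    have neT: "?CT \<noteq> {}" using xT(1) by blast
    have ubP: "2 * y \<le> K - int ((n - 2) * (n - 1))" if "y \<in> ?CP" for y
      using that ub_path[OF n2] cP unfolding K_def by auto
    have ubT: "2 * y \<le> K - 2 * (2 * int (n - 1) - int n)" if "y \<in> ?CT" for y
      using that ub_general[OF sg _ d] cEn assms(2) unfolding K_def by auto
    have ar: "2 * (2 * int (n - 1) - int n) = 2 * int (n - 2)" using n2 by (simp add: of_nat_diff)
    have "nu_star {0..<n} (path_edges n) \<le> cost V E xT"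
      unfolding nu_star_def
    proof (rule Max.boundedI[OF fP neP])
      fix y assume "y \<in> ?CP"
      then show "y \<le> cost V E xT" using ubP xT(2) by fastforce
    qed
    also have "cost V E xT \<le> nu_star V E"
      unfolding nu_star_def by (rule Max_ge[OF fT]) (use xT in blast)
    finally have one: "nu_star {0..<n} (path_edges n) \<le> nu_star V E" .
    have "nu_star V E \<le> cost {0..<n} (star_edges n) xS"
      unfolding nu_star_def
    proof (rule Max.boundedI[OF fT neT])
      fix y assume "y \<in> ?CT"
      then show "y \<le> cost {0..<n} (star_edges n) xS" using ubT[of y] xS(2) ar by linarith
    qed
    also have "cost {0..<n} (star_edges n) xS \<le> nu_star {0..<n} (star_edges n)"
      unfolding nu_star_def by (rule Max_ge[OF fS]) (use xS in blast)
    finally show ?thesis using one by simp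
  qed
qed

end
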